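(* Let $\mathcal{X},\mathcal{Y}$ be finite, $P_X$ a distribution, $P_{Y|X}$ a channel, $P_{XY}=P_XP_{Y|X}$ with $\mathcal{Y}$-marginal $P_Y$, and $R>I(P_X,P_{Y|X})>0$. Define \[ \alpha(R,P_X,P_{Y|X})=\min_{Q_{XY}}\Big\{D(Q_{XY}\|P_{XY})+\tfrac12\big[R-D(Q_{XY}\|P_XQ_Y)\big]_+\Big\}, \] \[ \beta(R,P_X,P_{Y|X})=\max_{\lambda\ge0}\max_{\lambda'\le1}\Big\{\frac{\lambda}{2\lambda+1-\lambda'}\Big(R-(1-\lambda')D_{1+\lambda}(P_{XY}\|P_XP_Y)-\lambda'\widetilde D_{1+\lambda'}(P_{XY}\|P_XP_Y)\Big)\Big\}. \] Then $\alpha(R,P_X,P_{Y|X})\ge\beta(R,P_X,P_{Y|X})$.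
   Context: $Q_Y$ is the $\mathcal{Y}$-marginal of $Q_{XY}$, $[f]_+=\max\{0,f\}$, $D$ is relative entropy. With $(X,Y)\sim P_{XY}$ and information density $\imath_{X;Y}(x;y)=\log\frac{P_{Y|X}(y|x)}{P_Y(y)}$: $D_{1+\lambda}(P_{XY}\|P_XP_Y)=\frac1\lambda\log\mathbb{E}[\exp(\lambda\,\imath_{X;Y}(X;Y))]$ (the Rényi divergence of order $1+\lambda$; at $\lambda=0$ it equals the mutual information), and $\widetilde D_{1+\lambda'}(P_{XY}\|P_XP_Y)=\frac{2}{\lambda'}\log\mathbb{E}\big[\mathbb{E}^{1/2}[\exp(\lambda'\,\imath_{X;Y}(X;Y))\mid Y]\big]$, so that $\lambda'\widetilde D_{1+\lambda'}=2\log\mathbb{E}\big[\mathbb{E}^{1/2}[\exp(\lambda'\imath_{X;Y}(X;Y))|Y]\big]$. Logs and exps use a common base. *)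

theory Defs
  imports "HOL-Probability.Probability"
begin

text \<open>Finite alphabets are finite types; logs/exps are natural (base e).
  Joint distributions are given by pmfs; quantities are written out as finite sums.\<close>

definition PXY :: "'a pmf \<Rightarrow> ('a \<Rightarrow> 'b pmf) \<Rightarrow> 'a \<times> 'b \<Rightarrow> real" where
  "PXY PX W = (\<lambda>(x,y). pmf PX x * pmf (W x) y)"

definition PYm :: "'a::finite pmf \<Rightarrow> ('a \<Rightarrow> 'b pmf) \<Rightarrow> 'b \<Rightarrow> real" where
  "PYm PX W y = (\<Sum>x\<in>UNIV. PXY PX W (x,y))"

definition QYm :: "('a::finite \<times> 'b) pmf \<Rightarrow> 'b \<Rightarrow> real" where
  "QYm Q y = (\<Sum>x\<in>UNIV. pmf Q (x,y))"

definition relent :: "('c::finite \<Rightarrow> real) \<Rightarrow> ('c \<Rightarrow> real) \<Rightarrow> ereal" where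
  "relent Q P = (if (\<exists>z. Q z > 0 \<and> P z = 0) then \<infinity>
      else ereal (\<Sum>z\<in>{z. Q z > 0}. Q z * ln (Q z / P z)))"

text \<open>exp of the information density: P_{Y|X}(y|x)/P_Y(y).\<close>
definition ratio :: "'a::finite pmf \<Rightarrow> ('a \<Rightarrow> 'b pmf) \<Rightarrow> 'a \<times> 'b \<Rightarrow> real" where
  "ratio PX W = (\<lambda>(x,y). pmf (W x) y / PYm PX W y)"

definition mutual_info :: "'a::finite pmf \<Rightarrow> ('a \<Rightarrow> 'b::finite pmf) \<Rightarrow> real" where
  "mutual_info PX W = (\<Sum>z\<in>{z. PXY PX W z > 0}. PXY PX W z * ln (ratio PX W z))"

text \<open>D_{1+\<lambda>}(P_XY || P_X P_Y); at \<lambda> = 0 it is the mutual information.\<close>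
definition renyi :: "real \<Rightarrow> 'a::finite pmf \<Rightarrow> ('a \<Rightarrow> 'b::finite pmf) \<Rightarrow> real" where
  "renyi l PX W = (if l = 0 then mutual_info PX W
     else (1 / l) * ln (\<Sum>z\<in>{z. PXY PX W z > 0}. PXY PX W z * (ratio PX W z) powr l))"

text \<open>\<lambda>' * tilde D_{1+\<lambda>'} = 2 log E[ E^{1/2}[exp(\<lambda>' i(X;Y)) | Y] ].\<close>
definition lam_tildeD :: "real \<Rightarrow> 'a::finite pmf \<Rightarrow> ('a \<Rightarrow> 'b::finite pmf) \<Rightarrow> real" where
  "lam_tildeD l PX W = 2 * ln (\<Sum>y\<in>{y. PYm PX W y > 0}. PYm PX W y *
      sqrt ((\<Sum>x\<in>{x. PXY PX W (x,y) > 0}. PXY PX W (x,y) * (ratio PX W (x,y)) powr l)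
            / PYm PX W y))"

definition alpha_exp :: "real \<Rightarrow> 'a::finite pmf \<Rightarrow> ('a \<Rightarrow> 'b::finite pmf) \<Rightarrow> ereal" where
  "alpha_exp R PX W = (INF Q\<in>(UNIV :: ('a \<times> 'b) pmf set).
      relent (pmf Q) (PXY PX W)
      + ereal (1/2) * max 0 (ereal R - relent (pmf Q) (\<lambda>(x,y). pmf PX x * QYm Q y)))"

definition beta_exp :: "real \<Rightarrow> 'a::finite pmf \<Rightarrow> ('a \<Rightarrow> 'b::finite pmf) \<Rightarrow> ereal" where
  "beta_exp R PX W = (SUP p\<in>{(l, l'). l \<ge> 0 \<and> l' \<le> (1::real)}.
      ereal (fst p / (2 * fst p + 1 - snd p)
        * (R - (1 - snd p) * renyi (fst p) PX W - lam_tildeD (snd p) PX W)))"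

end

theory Submission
  imports Defs
begin

lemma logsum_pt:
  fixes a b A B :: real
  assumes "a \<ge> 0" "b \<ge> 0" "a > 0 \<Longrightarrow> b > 0" "A > 0" "B > 0"
  shows "a*ln(A/B) + a - b*A/B \<le> a*ln(a/b)"
proof (cases "a = 0")
  case True thus ?thesis using assms by simp
next
  case False
  hence a: "a>0" "b>0" using assms by auto
  define t where "t = (b*A)/(a*B)"
  have t: "t > 0" using a assms by (auto simp: t_def intro!: divide_pos_pos mult_pos_pos)
  have lt: "ln t \<le> t - 1" using t by (rule ln_le_minus_one)
  have "ln t = ln b + ln A - ln a - ln B" using a assms by (simp add: t_def ln_div ln_mult)
  hence lab: "ln (a/b) = ln (A/B) - ln t" using a assms by (simp add: ln_div)
  have e: "a*ln(a/b) = a*ln(A/B) - a*ln t" unfolding lab by (simp add: right_diff_distrib)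
  have "a * ln t \<le> a*(t-1)" using lt a by (simp add: mult_left_mono)
  moreover have "a*(t-1) = b*A/B - a" using a assms by (simp add: t_def field_simps)
  ultimately show ?thesis using e by linarith
qed

lemma logsum:
  fixes a b :: "'c \<Rightarrow> real"
  assumes "finite S" "\<forall>z\<in>S. a z \<ge> 0" "\<forall>z\<in>S. b z \<ge> 0" "\<forall>z\<in>S. a z > 0 \<longrightarrow> b z > 0"
    "sum b S \<le> B" "B > 0" "sum a S > 0"
  shows "sum a S * ln (sum a S / B) \<le> (\<Sum>z\<in>S. a z * ln (a z / b z))"
proof -
  define A where "A = sum a S"
  have A: "A > 0" using assms A_def by simp
  have "(\<Sum>z\<in>S. a z * ln(A/B) + a z - b z * A/B) \<le> (\<Sum>z\<in>S. a z * ln (a z / b z))"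
    apply (rule sum_mono) using logsum_pt assms A by auto
  moreover have "(\<Sum>z\<in>S. a z * ln(A/B) + a z - b z * A/B) = A*ln(A/B) + A - (sum b S)*A/B"
    by (simp add: sum.distrib sum_subtractf sum_distrib_right A_def sum_divide_distrib)
  moreover have "(sum b S)*A/B \<le> A" using assms A by (simp add: divide_le_eq mult.commute mult_left_mono)
  ultimately show ?thesis unfolding A_def[symmetric] by linarith
qed

lemma sum_group:
  fixes f :: "'a::finite \<times> 'b::finite \<Rightarrow> real"
  shows "(\<Sum>z\<in>UNIV. f z) = (\<Sum>y\<in>UNIV. \<Sum>x\<in>UNIV. f (x,y))"
proof -
  have "(\<Sum>y\<in>UNIV. \<Sum>x\<in>UNIV. f (x,y)) = (\<Sum>x\<in>UNIV. \<Sum>y\<in>UNIV. f (x,y))" by (rule sum.swap)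
  also have "\<dots> = (\<Sum>z\<in>UNIV\<times>UNIV. f z)" by (simp add: sum.cartesian_product)
  finally show ?thesis by (simp add: UNIV_Times_UNIV)
qed

lemma sum_supp:
  fixes F :: "'c::finite \<Rightarrow> real"
  assumes "\<And>z. \<not> g z > (0::real) \<Longrightarrow> F z = 0"
  shows "(\<Sum>z\<in>{z. g z > 0}. F z) = (\<Sum>z\<in>UNIV. F z)"
  by (rule sum.mono_neutral_left) (auto simp: assms)

lemma core:
  fixes PX :: "'a::finite pmf" and W :: "'a \<Rightarrow> 'b::finite pmf" and Q :: "('a \<times> 'b) pmf"
    and l l' R :: real
  assumes l: "l > 0" and l': "l' \<le> 1"
    and hq: "\<And>z. pmf Q z > 0 \<Longrightarrow> PXY PX W z > 0"
  shows "l / (2*l+1-l') * (R - (1-l') * renyi l PX W - lam_tildeD l' PX W)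
     \<le> (\<Sum>z\<in>{z. pmf Q z > 0}. pmf Q z * ln (pmf Q z / PXY PX W z))
       + 1/2 * max 0 (R - (\<Sum>z\<in>{z. pmf Q z > 0}. pmf Q z * ln (pmf Q z / (\<lambda>(x,y). pmf PX x * QYm Q y) z)))"
proof -
  define q where "q = pmf Q"
  define P where "P = PXY PX W"
  define PY where "PY = PYm PX W"
  define QY where "QY = QYm Q"
  define r where "r = ratio PX W"
  have Pxy: "P (x,y) = pmf PX x * pmf (W x) y" for x y by (simp add: P_def PXY_def)
  have Pnn: "P z \<ge> 0" for z by (cases z) (simp add: Pxy)
  have qnn: "q z \<ge> 0" for z by (simp add: q_def)
  have PYe: "PY y = (\<Sum>x\<in>UNIV. P(x,y))" for y by (simp add: PY_def PYm_def P_def)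
  have QYe: "QY y = (\<Sum>x\<in>UNIV. q(x,y))" for y by (simp add: QY_def QYm_def q_def)
  have re: "r (x,y) = pmf (W x) y / PY y" for x y by (simp add: r_def ratio_def PY_def)
  have sumq: "(\<Sum>z\<in>UNIV. q z) = 1" unfolding q_def by (rule sum_pmf_eq_1) auto
  have sumQY: "(\<Sum>y\<in>UNIV. QY y) = 1" using sumq by (simp add: QYe sum_group[of q])
  have hq': "P z > 0" if "q z > 0" for z using hq that by (simp add: q_def P_def)
  have pos: "pmf PX x > 0 \<and> pmf (W x) y > 0 \<and> PY y > 0 \<and> QY y > 0 \<and> r (x,y) > 0 \<and> P (x,y) > 0"
    if "q (x,y) > 0" for x y
  proof -
    have P0: "P(x,y) > 0" using hq' that by simp
    hence a: "pmf PX x > 0" "pmf (W x) y > 0" using Pxy[of x y]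
      by (metis pmf_nonneg less_eq_real_def mult_zero_left mult_zero_right)+
    have "P(x,y) \<le> PY y" unfolding PYe by (rule member_le_sum) (auto simp: Pnn)
    hence b: "PY y > 0" using P0 by simp
    have "q(x,y) \<le> QY y" unfolding QYe by (rule member_le_sum) (auto simp: qnn)
    hence c: "QY y > 0" using that by simp
    show ?thesis using a b c P0 by (simp add: re)
  qed

  define D1 where "D1 = (\<Sum>z\<in>UNIV. q z * ln (q z / P z))"
  define D2 where "D2 = (\<Sum>z\<in>UNIV. q z * ln (q z / (pmf PX (fst z) * QY (snd z))))"
  define S1 where "S1 = (\<Sum>z\<in>UNIV. q z * ln (r z))"
  define S2 where "S2 = (\<Sum>z\<in>UNIV. q z * ln (QY (snd z) / PY (snd z)))"
  define E where "E = (\<Sum>z\<in>{z. P z > 0}. P z * r z powr l)"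
  define h where "h y = (\<Sum>x\<in>{x. P(x,y) > 0}. P(x,y) * r(x,y) powr l')" for y
  define Bs where "Bs = (\<Sum>y\<in>UNIV. sqrt (h y * PY y))"
  have D1eq: "(\<Sum>z\<in>{z. pmf Q z > 0}. pmf Q z * ln (pmf Q z / PXY PX W z)) = D1"
    unfolding D1_def q_def P_def by (rule sum_supp) (simp add: order_less_le)
  have D2eq: "(\<Sum>z\<in>{z. pmf Q z > 0}. pmf Q z * ln (pmf Q z / (\<lambda>(x,y). pmf PX x * QYm Q y) z)) = D2"
    unfolding D2_def q_def QY_def
    by (subst sum_supp) (auto simp: order_less_le split: prod.splits intro!: sum.cong)
  have ID: "D2 = D1 + S1 - S2"
  proof -
    have "q z * ln (q z / (pmf PX (fst z) * QY (snd z))) = q z * ln (q z / P z) + q z * ln (r z) - q z * ln (QY (snd z) / PY (snd z))" for z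
    proof (cases "q z > 0")
      case False thus ?thesis using qnn[of z] by simp
    next
      case True
      obtain x y where z: "z = (x,y)" by (cases z)
      have p: "pmf PX x > 0 \<and> pmf (W x) y > 0 \<and> PY y > 0 \<and> QY y > 0 \<and> r (x,y) > 0 \<and> P (x,y) > 0"
        using pos True z by simp
      show ?thesis using p True unfolding z
        by (simp add: ln_div ln_mult Pxy re algebra_simps)
    qed
    thus ?thesis unfolding D1_def D2_def S1_def S2_def
      by (simp add: sum.distrib sum_subtractf)
  qed
  have Ren: "renyi l PX W = 1/l * ln E" using l by (simp add: renyi_def E_def P_def r_def)
  have Lt: "lam_tildeD l' PX W = 2 * ln Bs"
  proof -
    have "(\<Sum>y\<in>{y. PY y > 0}. PY y * sqrt (h y / PY y)) = Bs" unfolding Bs_def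
    proof (rule trans[OF sum.cong sum_supp])
      show "(\<And>y. \<not> PY y > 0 \<Longrightarrow> sqrt (h y * PY y) = 0)" using PYe Pnn
        by (metis (no_types, lifting) linorder_not_le mult_zero_right order_antisym real_sqrt_zero sum_nonneg)
      show "\<And>y. y \<in> {y. PY y > 0} \<Longrightarrow> PY y * sqrt (h y / PY y) = sqrt (h y * PY y)"
      proof -
        fix y assume "y \<in> {y. PY y > 0}"
        hence py: "PY y > 0" by simp
        have "PY y * sqrt (h y / PY y) = sqrt (h y) * (PY y / sqrt (PY y))"
          by (simp add: real_sqrt_divide)
        also have "\<dots> = sqrt (h y * PY y)" using py by (simp add: real_div_sqrt real_sqrt_mult)
        finally show "PY y * sqrt (h y / PY y) = sqrt (h y * PY y)" .
      qed
    qed simp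
    thus ?thesis by (simp add: lam_tildeD_def PY_def h_def P_def r_def)
  qed

  obtain z0 where z0: "q z0 > 0"
  proof -
    have "\<exists>z. q z > 0"
    proof (rule ccontr)
      assume "\<not> (\<exists>z. q z > 0)"
      hence "\<forall>z. q z = 0" using qnn by (metis less_eq_real_def)
      hence "q = (\<lambda>z. 0)" by auto
      thus False using sumq by simp
    qed
    thus ?thesis using that by blast
  qed
  have lnq: "q z * ln (q z / (P z * r z powr t)) = q z * ln (q z / P z) - t * (q z * ln (r z))" for z t
  proof (cases "q z > 0")
    case False thus ?thesis using qnn[of z] by simp
  next
    case True
    obtain x y where z: "z = (x,y)" by (cases z)
    have p: "r z > 0" "P z > 0" using pos True z by auto
    show ?thesis using p True
      by (simp add: ln_div ln_mult ln_powr algebra_simps)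
  qed
  have DV1: "l * S1 - ln E \<le> D1"
  proof -
    define b where "b z = P z * r z powr l" for z
    have bsum: "sum b UNIV = E" unfolding E_def b_def by (rule sum_supp[symmetric]) (simp add: order_less_le Pnn)
    have bpos: "q z > 0 \<Longrightarrow> b z > 0" for z using pos[of "fst z" "snd z"] by (simp add: b_def)
    have Epos: "E > 0"
    proof -
      have "b z0 \<le> sum b UNIV" by (rule member_le_sum) (auto simp: b_def Pnn)
      thus ?thesis using bpos[OF z0] bsum by simp
    qed
    have "sum q UNIV * ln (sum q UNIV / E) \<le> (\<Sum>z\<in>UNIV. q z * ln (q z / b z))"
      by (rule logsum) (use qnn Pnn bpos bsum Epos sumq in \<open>auto simp: b_def\<close>)
    also have "\<dots> = D1 - l * S1" unfolding b_def D1_def S1_def lnq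
      by (simp add: sum_subtractf sum_distrib_left)
    finally show ?thesis using sumq Epos by (simp add: ln_div)
  qed

  have hnn: "h y \<ge> 0" for y unfolding h_def by (rule sum_nonneg) (simp add: Pnn)
  have PYnn: "PY y \<ge> 0" for y unfolding PYe by (rule sum_nonneg) (simp add: Pnn)
  have QYnn: "QY y \<ge> 0" for y unfolding QYe by (rule sum_nonneg) (simp add: qnn)
  define b where "b z = P z * r z powr l'" for z
  have hb: "h y = (\<Sum>x\<in>UNIV. b (x,y))" for y unfolding h_def b_def
    by (rule sum_supp) (simp add: order_less_le Pnn)
  have bpos: "q z > 0 \<Longrightarrow> b z > 0" for z using pos[of "fst z" "snd z"] by (simp add: b_def)
  have bnn: "b z \<ge> 0" for z by (simp add: b_def Pnn)
  have hpos: "QY y > 0 \<Longrightarrow> h y > 0" for y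
  proof -
    assume "QY y > 0"
    then obtain x where x: "q (x,y) > 0" unfolding QYe
      by (metis (no_types, lifting) qnn order_less_le sum_nonneg_eq_0_iff finite)
    have "b (x,y) \<le> h y" unfolding hb by (rule member_le_sum) (auto simp: bnn)
    thus "h y > 0" using bpos[OF x] by simp
  qed
  have stepA: "QY y * ln (QY y / h y) \<le> (\<Sum>x\<in>UNIV. q (x,y) * ln (q (x,y) / b (x,y)))" for y
  proof (cases "QY y > 0")
    case True
    show ?thesis unfolding QYe
      by (rule logsum) (use qnn bnn bpos hb hpos[OF True] True QYe in auto)
  next
    case False
    hence "QY y = 0" using QYnn[of y] by simp
    hence "\<forall>x. q (x,y) = 0" unfolding QYe using qnn by (simp add: sum_nonneg_eq_0_iff)
    thus ?thesis using \<open>QY y = 0\<close> by simp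
  qed
  have A1: "(\<Sum>y\<in>UNIV. QY y * ln (QY y / h y)) \<le> D1 - l' * S1"
  proof -
    have "(\<Sum>y\<in>UNIV. QY y * ln (QY y / h y)) \<le> (\<Sum>y\<in>UNIV. \<Sum>x\<in>UNIV. q (x,y) * ln (q (x,y) / b (x,y)))"
      by (rule sum_mono) (rule stepA)
    also have "\<dots> = (\<Sum>z\<in>UNIV. q z * ln (q z / b z))" by (rule sum_group[symmetric])
    also have "\<dots> = D1 - l' * S1" unfolding b_def D1_def S1_def lnq
      by (simp add: sum_subtractf sum_distrib_left)
    finally show ?thesis .
  qed
  have S2e: "S2 = (\<Sum>y\<in>UNIV. QY y * ln (QY y / PY y))"
  proof -
    have "S2 = (\<Sum>y\<in>UNIV. \<Sum>x\<in>UNIV. q (x,y) * ln (QY y / PY y))" unfolding S2_def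
      using sum_group[of "\<lambda>z. q z * ln (QY (snd z) / PY (snd z))"] by simp
    also have "\<dots> = (\<Sum>y\<in>UNIV. QY y * ln (QY y / PY y))" by (simp add: QYe sum_distrib_right)
    finally show ?thesis .
  qed
  have sqpos: "QY y > 0 \<Longrightarrow> sqrt (h y * PY y) > 0" for y
  proof -
    assume qy: "QY y > 0"
    then obtain x where x: "q (x,y) > 0" unfolding QYe
      by (metis (no_types, lifting) qnn order_less_le sum_nonneg_eq_0_iff finite)
    have "PY y > 0" using pos[OF x] by simp
    thus "sqrt (h y * PY y) > 0" using hpos[OF qy] by simp
  qed
  have Bpos: "Bs > 0"
  proof -
    obtain x y where "z0 = (x,y)" by (cases z0)
    hence qy: "QY y > 0" using pos z0 by auto
    have "sqrt (h y * PY y) \<le> Bs" unfolding Bs_def by (rule member_le_sum) (auto simp: hnn PYnn)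
    thus ?thesis using sqpos[OF qy] by linarith
  qed
  have stepB: "sum QY UNIV * ln (sum QY UNIV / Bs) \<le> (\<Sum>y\<in>UNIV. QY y * ln (QY y / sqrt (h y * PY y)))"
    by (rule logsum) (use QYnn sqpos Bpos sumQY in \<open>auto simp: Bs_def hnn PYnn\<close>)
  have B2: "QY y * ln (QY y / h y) + QY y * ln (QY y / PY y) = 2 * (QY y * ln (QY y / sqrt (h y * PY y)))" for y
  proof (cases "QY y > 0")
    case False thus ?thesis using QYnn[of y] by simp
  next
    case True
    have "h y > 0" "PY y > 0" using hpos[OF True] True sqpos[OF True] hnn[of y] PYnn[of y]
      by (auto simp: zero_less_mult_iff)
    thus ?thesis using True by (simp add: ln_div ln_mult ln_sqrt algebra_simps)
  qed
  have DV2: "- (2 * ln Bs) \<le> D1 + S2 - l' * S1"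
  proof -
    have "(\<Sum>y\<in>UNIV. QY y * ln (QY y / h y)) + S2 = 2 * (\<Sum>y\<in>UNIV. QY y * ln (QY y / sqrt (h y * PY y)))"
      unfolding S2e sum.distrib[symmetric] B2 by (simp add: sum_distrib_left)
    moreover have "ln (1 / Bs) = - ln Bs" using Bpos by (simp add: ln_div)
    ultimately show ?thesis using A1 stepB sumQY by simp
  qed

  define c where "c = 2*l+1-l'"
  have c: "c > 0" using l l' by (simp add: c_def)
  have m: "l * (R - D2) \<le> c/2 * max 0 (R - D2)"
  proof -
    have "l * (R - D2) \<le> l * max 0 (R - D2)" using l by (simp add: mult_left_mono)
    also have "\<dots> \<le> c/2 * max 0 (R - D2)" using l l' by (intro mult_right_mono) (auto simp: c_def)
    finally show ?thesis .
  qed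
  have f1: "(1-l')*(l*S1 - ln E) \<le> (1-l')*D1" using DV1 l' by (intro mult_left_mono) auto
  have f2: "l * (- (2 * ln Bs)) \<le> l * (D1 + S2 - l' * S1)" using DV2 l by (intro mult_left_mono) auto
  have key: "l * (R - (1-l') * (1/l * ln E) - 2 * ln Bs) \<le> c * (D1 + 1/2 * max 0 (R - D2))"
  proof -
    have e1: "l * (R - (1-l') * (1/l * ln E) - 2 * ln Bs) = l*R - (1-l')*ln E - l*(2*ln Bs)"
      using l by (simp add: field_simps)
    have e2: "c * (D1 + 1/2 * max 0 (R - D2)) = c*D1 + c/2 * max 0 (R - D2)" by (simp add: algebra_simps)
    have e3: "c*D1 = (1-l')*D1 + l*D1 + l*D1" by (simp add: c_def algebra_simps)
    have e4: "l * (R - D2) = l*R - l*D1 - l*S1 + l*S2" unfolding ID by (simp add: algebra_simps)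
    have e5: "(1-l')*(l*S1 - ln E) = l*S1 - l'*(l*S1) - (1-l')*ln E" by (simp add: algebra_simps)
    have e6: "l * (D1 + S2 - l' * S1) = l*D1 + l*S2 - l'*(l*S1)" by (simp add: algebra_simps)
    show ?thesis unfolding e1 e2 e3 using m e4 f1 f2 e5 e6 by linarith
  qed
  have "l / c * (R - (1-l') * (1/l * ln E) - 2 * ln Bs) \<le> D1 + 1/2 * max 0 (R - D2)"
    using key c by (simp add: pos_divide_le_eq mult.commute)
  thus ?thesis unfolding D1eq D2eq Ren Lt c_def q_def P_def .
qed

lemma relent_nonneg:
  fixes PX :: "'a::finite pmf" and W :: "'a \<Rightarrow> 'b::finite pmf" and Q :: "('a \<times> 'b) pmf"
  shows "relent (pmf Q) (PXY PX W) \<ge> 0"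
proof (cases "\<exists>z. pmf Q z > 0 \<and> PXY PX W z = 0")
  case True thus ?thesis by (simp add: relent_def)
next
  case False
  define P where "P = PXY PX W"
  have Pnn: "P z \<ge> 0" for z by (cases z) (simp add: P_def PXY_def)
  have sumP: "sum P UNIV = 1"
  proof -
    have "sum P UNIV = (\<Sum>y\<in>UNIV. \<Sum>x\<in>UNIV. P (x,y))" by (rule sum_group)
    also have "\<dots> = (\<Sum>x\<in>UNIV. \<Sum>y\<in>UNIV. P (x,y))" by (rule sum.swap)
    also have "\<dots> = (\<Sum>x\<in>UNIV. pmf PX x * (\<Sum>y\<in>UNIV. pmf (W x) y))"
      by (simp add: P_def PXY_def sum_distrib_left)
    also have "\<dots> = (\<Sum>x\<in>UNIV. pmf PX x)" by (simp add: sum_pmf_eq_1)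
    also have "\<dots> = 1" by (simp add: sum_pmf_eq_1)
    finally show ?thesis .
  qed
  have sq: "sum (pmf Q) UNIV = 1" by (simp add: sum_pmf_eq_1)
  have "sum (pmf Q) UNIV * ln (sum (pmf Q) UNIV / 1) \<le> (\<Sum>z\<in>UNIV. pmf Q z * ln (pmf Q z / P z))"
  proof (rule logsum)
    show "\<forall>z\<in>UNIV. 0 < pmf Q z \<longrightarrow> 0 < P z" using False Pnn unfolding P_def by (metis order_less_le)
  qed (use Pnn sumP sq in auto)
  also have "\<dots> = (\<Sum>z\<in>{z. pmf Q z > 0}. pmf Q z * ln (pmf Q z / P z))"
    by (rule sum_supp[symmetric]) (simp add: order_less_le)
  finally show ?thesis using False sq by (simp add: relent_def P_def)
qed

theorem proposition3:
  fixes PX :: "'a::finite pmf" and W :: "'a \<Rightarrow> 'b::finite pmf" and R :: real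
  assumes "R > mutual_info PX W" and "mutual_info PX W > 0"
  shows "alpha_exp R PX W \<ge> beta_exp R PX W"
  unfolding beta_exp_def alpha_exp_def
proof (rule SUP_least, rule INF_greatest)
  fix p :: "real \<times> real" and Q :: "('a \<times> 'b) pmf"
  assume "p \<in> {(l, l'). l \<ge> 0 \<and> l' \<le> (1::real)}"
  then obtain l l' where p: "p = (l,l')" and l: "l \<ge> 0" and l': "l' \<le> 1" by auto
  define T where "T = ereal (1/2) * max 0 (ereal R - relent (pmf Q) (\<lambda>(x,y). pmf PX x * QYm Q y))"
  have T0: "T \<ge> 0" unfolding T_def by (rule ereal_0_le_mult) auto
  show "ereal (fst p / (2 * fst p + 1 - snd p) * (R - (1 - snd p) * renyi (fst p) PX W - lam_tildeD (snd p) PX W))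
     \<le> relent (pmf Q) (PXY PX W) + ereal (1/2) * max 0 (ereal R - relent (pmf Q) (\<lambda>(x,y). pmf PX x * QYm Q y))"
    unfolding T_def[symmetric] p fst_conv snd_conv
  proof (cases "l = 0")
    case True
    have "0 \<le> relent (pmf Q) (PXY PX W) + T" using relent_nonneg[of Q PX W] T0 by (rule add_nonneg_nonneg)
    thus "ereal (l / (2 * l + 1 - l') * (R - (1 - l') * renyi l PX W - lam_tildeD l' PX W)) \<le> relent (pmf Q) (PXY PX W) + T"
      using True by (simp add: zero_ereal_def)
  next
    case False
    hence lpos: "l > 0" using l by simp
    show "ereal (l / (2 * l + 1 - l') * (R - (1 - l') * renyi l PX W - lam_tildeD l' PX W)) \<le> relent (pmf Q) (PXY PX W) + T"
    proof (cases "\<exists>z. pmf Q z > 0 \<and> PXY PX W z = 0")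
      case True
      hence "relent (pmf Q) (PXY PX W) = \<infinity>" by (simp add: relent_def)
      thus ?thesis using T0 by simp
    next
      case nf: False
      have PXnn: "PXY PX W z \<ge> 0" for z by (cases z) (simp add: PXY_def)
      have hq: "\<And>z. pmf Q z > 0 \<Longrightarrow> PXY PX W z > 0" using nf PXnn by (auto simp: order_less_le)
      have nf2: "\<not> (\<exists>z. pmf Q z > 0 \<and> (\<lambda>(x,y). pmf PX x * QYm Q y) z = 0)"
      proof
        assume "\<exists>z. pmf Q z > 0 \<and> (\<lambda>(x,y). pmf PX x * QYm Q y) z = 0"
        then obtain x y where xy: "pmf Q (x,y) > 0" "pmf PX x * QYm Q y = 0" by auto
        have "PXY PX W (x,y) > 0" using hq xy(1) by simp
        hence a: "pmf PX x > 0" by (auto simp: PXY_def zero_less_mult_iff pmf_nonneg not_less[symmetric])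
        have "pmf Q (x,y) \<le> QYm Q y" unfolding QYm_def by (rule member_le_sum) auto
        thus False using a xy by simp
      qed
      define D1 where "D1 = (\<Sum>z\<in>{z. pmf Q z > 0}. pmf Q z * ln (pmf Q z / PXY PX W z))"
      define D2 where "D2 = (\<Sum>z\<in>{z. pmf Q z > 0}. pmf Q z * ln (pmf Q z / (\<lambda>(x,y). pmf PX x * QYm Q y) z))"
      have r1: "relent (pmf Q) (PXY PX W) = ereal D1" using nf by (simp add: relent_def D1_def)
      have r2: "relent (pmf Q) (\<lambda>(x,y). pmf PX x * QYm Q y) = ereal D2"
        unfolding relent_def D2_def by (rule if_not_P[OF nf2])
      have mx: "max 0 (ereal R - ereal D2) = ereal (max 0 (R - D2))"
        by (cases "0 \<le> R - D2") (auto simp: max_def)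
      have "T = ereal (1/2) * ereal (max 0 (R - D2))" unfolding T_def r2 mx by (rule refl)
      hence "T = ereal (1/2 * max 0 (R - D2))" by (simp only: times_ereal.simps(1))
      thus ?thesis unfolding r1 using core[where Q=Q and PX=PX and W=W and R=R, OF lpos l' hq] unfolding D1_def[symmetric] D2_def[symmetric]
        by simp
    qed
  qed
qed

end
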